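(* Let $p$ be an odd prime and let $a,b\in\mathbb{Z}$ with $ab\equiv-1\pmod p$. Define $$\{a,b\}_p=\prod_{\substack{i,j=1\\ i\not\equiv aj,\ i\not\equiv bj\ (\mathrm{mod}\ p)}}^{(p-1)/2}(i-aj)(i-bj),$$ which is congruent modulo $p$ to $T_p(1,-(a+b),-1)$. (i) If $p\equiv1\pmod 4$ and $p\nmid a-b$, then $-\{a,b\}_p\equiv\left(\frac{a-b}{p}\right)\pmod p$; if $p\equiv3\pmod4$, then $-\{a,b\}_p\equiv\left(\frac{a(a-b)}{p}\right)=\left(\frac{a^2+1}{p}\right)\pmod p$. (ii) If $a\equiv b\pmod p$ and $p\equiv1\pmod8$, then $\{a,b\}_p\equiv(-1)^{(p+7)/8}\,\left(\frac{p-1}{2}\right)!\pmod p$. If $p\equiv5\pmod8$ and $a\equiv b\equiv(-1)^k\left(\frac{p-1}{2}\right)!\pmod p$ with $k\in\{0,1\}$, then $\{a,b\}_p\equiv(-1)^{k+(p-5)/8}\pmod p$.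
   Context: $\left(\frac{\cdot}{p}\right)$ denotes the Legendre symbol. For an odd prime $p$ and $a,b,c\in\mathbb{Z}$, $T_p(a,b,c)=\prod_{i,j=1,\ p\nmid ai^2+bij+cj^2}^{(p-1)/2}(ai^2+bij+cj^2)$. *)

theory Defs
  imports "HOL-Number_Theory.Number_Theory"
begin

definition Tp :: "nat \<Rightarrow> int \<Rightarrow> int \<Rightarrow> int \<Rightarrow> int" where
  "Tp p a b c =
     (\<Prod>(i,j) \<in> {(i,j). i \<in> {1..(p-1) div 2} \<and> j \<in> {1..(p-1) div 2}
                        \<and> \<not> (int p dvd a * int i ^ 2 + b * int i * int j + c * int j ^ 2)}.
        a * int i ^ 2 + b * int i * int j + c * int j ^ 2)"

definition brk :: "int \<Rightarrow> int \<Rightarrow> nat \<Rightarrow> int" where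
  "brk a b p =
     (\<Prod>(i,j) \<in> {(i,j). i \<in> {1..(p-1) div 2} \<and> j \<in> {1..(p-1) div 2}
                        \<and> \<not> [int i = a * int j] (mod int p) \<and> \<not> [int i = b * int j] (mod int p)}.
        (int i - a * int j) * (int i - b * int j))"

end

theory Submission
  imports Defs
begin

lemma dvd_lin: fixes m :: int
  assumes "m dvd u" "m dvd v" "w = c*u + d*v" shows "m dvd w"
  using assms by (simp add: dvd_add dvd_mult)

definition SS :: "int \<Rightarrow> int \<Rightarrow> nat \<Rightarrow> (nat \<times> nat) set" where
  "SS a b p = {(i,j). i \<in> {1..(p-1) div 2} \<and> j \<in> {1..(p-1) div 2}
                        \<and> \<not> [int i = a * int j] (mod int p) \<and> \<not> [int i = b * int j] (mod int p)}"

definition Yset :: "int \<Rightarrow> int \<Rightarrow> nat \<Rightarrow> nat \<Rightarrow> nat set" where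
  "Yset a b p x = {y. y \<in> {1..p-1} \<and> \<not> [int x = a * int y] (mod int p) \<and> \<not> [int x = b * int y] (mod int p)}"

definition CC :: "int \<Rightarrow> int \<Rightarrow> nat \<Rightarrow> nat \<Rightarrow> int" where
  "CC a b p x = (\<Prod>y\<in>Yset a b p x. int x - a * int y)"

lemma brk_SS: "brk a b p = (\<Prod>(i,j)\<in>SS a b p. (int i - a * int j) * (int i - b * int j))"
  by (simp add: brk_def SS_def)

lemma cg1: fixes m :: int assumes "m dvd a*b+1" "[m - u = a*v] (mod m)" shows "[v = b*u] (mod m)"
proof -
  have "m dvd m - u - a*v" using assms(2) by (simp add: cong_iff_dvd_diff)
  moreover have "v - b*u = b*(m - u - a*v) + ((a*b+1)*v - b*m)" by (simp add: algebra_simps)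
  ultimately show ?thesis using assms(1) unfolding cong_iff_dvd_diff
    by (metis dvd_add dvd_diff dvd_mult dvd_mult2 dvd_refl)
qed

lemma cg2: fixes m :: int assumes "m dvd a*b+1" "[u = a*(m - v)] (mod m)" shows "[v = b*u] (mod m)"
proof -
  have "m dvd u - a*(m-v)" using assms(2) by (simp add: cong_iff_dvd_diff)
  moreover have "v - b*u = (-b)*(u - a*(m-v)) + ((a*b+1)*v - a*b*m)" by (simp add: algebra_simps)
  ultimately show ?thesis using assms(1) unfolding cong_iff_dvd_diff
    by (metis dvd_add dvd_diff dvd_mult dvd_mult2 dvd_refl)
qed

lemma modeq: fixes u v m :: int
  assumes "0 \<le> u" "u < m" "0 \<le> v" "v < m" "[u = v] (mod m)" shows "u = v"
  using assms by (simp add: cong_def)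

definition YD :: "int \<Rightarrow> nat \<Rightarrow> nat \<Rightarrow> nat set" where
  "YD a p x = {y. y \<in> {1..p-1} \<and> \<not> [int x = a * int y] (mod int p)}"

context
  fixes p :: nat and a b :: int
  assumes pr: "prime p" and od: "odd p" and ab: "[a * b = -1] (mod int p)"
begin

lemma p3: "p \<ge> 3"
  using pr od prime_ge_2_nat[OF pr] by (metis One_nat_def Suc_1 dual_order.antisym even_numeral not_less_eq_eq numeral_3_eq_3)

lemma prP: "prime (int p)" using pr by simp

lemma abd: "int p dvd a*b + 1"
  using ab by (simp add: cong_iff_dvd_diff)

lemma nda: "\<not> int p dvd a"
proof
  assume "int p dvd a" then have "int p dvd a*b" by simp
  with abd have "int p dvd 1" by (metis dvd_add_right_iff)
  with prP show False by (simp add: prime_int_iff)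
qed

lemma ndb: "\<not> int p dvd b"
proof
  assume "int p dvd b" then have "int p dvd a*b" by simp
  with abd have "int p dvd 1" by (metis dvd_add_right_iff)
  with prP show False by (simp add: prime_int_iff)
qed

lemma ndy: "y \<in> {1..p-1} \<Longrightarrow> \<not> int p dvd int y"
proof
  assume y: "y \<in> {1..p-1}" and "int p dvd int y"
  then have "p dvd y" by simp
  with y show False by (auto dest: dvd_imp_le)
qed

lemma pdvd: "int p dvd u * v \<Longrightarrow> int p dvd u \<or> int p dvd v"
  using prP prime_dvd_mult_iff by blast

lemma part1: "[brk a b p = Tp p 1 (-(a+b)) (-1)] (mod int p)"
proof -
  have key: "int p dvd (1 * int i ^ 2 + -(a+b) * int i * int j + -1 * int j ^ 2)
     \<longleftrightarrow> [int i = a * int j] (mod int p) \<or> [int i = b * int j] (mod int p)" for i j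
  proof -
    have e: "1 * int i ^ 2 + -(a+b) * int i * int j + -1 * int j ^ 2
          = (int i - a * int j) * (int i - b * int j) - (a*b+1) * int j ^ 2"
      by (simp add: algebra_simps power2_eq_square)
    have "int p dvd (1 * int i ^ 2 + -(a+b) * int i * int j + -1 * int j ^ 2)
        \<longleftrightarrow> int p dvd (int i - a * int j) * (int i - b * int j)"
      unfolding e using abd by (metis dvd_diff dvd_mult2 dvd_diff_commute dvd_add_right_iff diff_add_cancel)
    also have "\<dots> \<longleftrightarrow> int p dvd (int i - a * int j) \<or> int p dvd (int i - b * int j)"
      using pdvd by auto
    finally show ?thesis by (simp add: cong_iff_dvd_diff)
  qed
  have seteq: "{(i,j). i \<in> {1..(p-1) div 2} \<and> j \<in> {1..(p-1) div 2}
                        \<and> \<not> [int i = a * int j] (mod int p) \<and> \<not> [int i = b * int j] (mod int p)}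
     = {(i,j). i \<in> {1..(p-1) div 2} \<and> j \<in> {1..(p-1) div 2}
                        \<and> \<not> (int p dvd 1 * int i ^ 2 + -(a+b) * int i * int j + -1 * int j ^ 2)}"
    using key by blast
  show ?thesis
    unfolding brk_def Tp_def seteq
  proof (rule cong_prod, clarify)
    fix i j :: nat
    have e: "1 * int i ^ 2 + -(a+b) * int i * int j + -1 * int j ^ 2
          = (int i - a * int j) * (int i - b * int j) - (a*b+1) * int j ^ 2"
      by (simp add: algebra_simps power2_eq_square)
    show "[(int i - a * int j) * (int i - b * int j) = 1 * int i ^ 2 + -(a+b) * int i * int j + -1 * int j ^ 2] (mod int p)"
      unfolding e cong_iff_dvd_diff using abd by simp
  qed
qed

lemma M1:
  "[a ^ card (SS a b p) * brk a b p = (\<Prod>x\<in>{1..(p-1) div 2}. CC a b p x)] (mod int p)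
   \<and> 2 * card (SS a b p) = (\<Sum>x\<in>{1..(p-1) div 2}. card (Yset a b p x))"
proof -
  define h where "h = (p-1) div 2"
  define S where "S = SS a b p"
  define g where "g = (\<lambda>(i::nat,j::nat). (j, p - i))"
  define f1 where "f1 = (\<lambda>(x::nat,y::nat). int x - a * int y)"
  define TT where "TT = (SIGMA x:{1..h}. Yset a b p x)"
  have hp: "h < p" "2*h+1 = p" using p3 od unfolding h_def by auto
  have Sh: "S = {(i,j). i \<in> {1..h} \<and> j \<in> {1..h}
          \<and> \<not> [int i = a * int j] (mod int p) \<and> \<not> [int i = b * int j] (mod int p)}"
    by (simp add: S_def SS_def h_def)
  have abd': "int p dvd b*a+1" using abd by (simp add: mult.commute)
  have finS: "finite S" unfolding S_def SS_def
    by (rule finite_subset[of _ "{1..(p-1) div 2} \<times> {1..(p-1) div 2}"]) auto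
  have finY: "finite (Yset a b p x)" for x unfolding Yset_def by auto
  have sub1: "TT \<subseteq> S \<union> g ` S"
  proof (rule subsetI)
    fix z assume "z \<in> TT"
    then obtain x y where z: "z = (x,y)" "x \<in> {1..h}" "y \<in> {1..p-1}"
      "\<not> [int x = a * int y] (mod int p)" "\<not> [int x = b * int y] (mod int p)"
      unfolding TT_def Yset_def by auto
    show "z \<in> S \<union> g ` S"
    proof (cases "y \<le> h")
      case True then show ?thesis using z unfolding Sh by auto
    next
      case False
      have c1: "\<not> [int (p - y) = a * int x] (mod int p)"
      proof
        assume "[int (p - y) = a * int x] (mod int p)"
        then have "[int p - int y = a * int x] (mod int p)" using z(3) by (metis (no_types, lifting) One_nat_def atLeastAtMost_iff diff_le_self le_trans of_nat_diff)
        then show False using cg1[OF abd] z(5) by blast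
      qed
      have c2: "\<not> [int (p - y) = b * int x] (mod int p)"
      proof
        assume "[int (p - y) = b * int x] (mod int p)"
        then have "[int p - int y = b * int x] (mod int p)" using z(3) by (metis (no_types, lifting) One_nat_def atLeastAtMost_iff diff_le_self le_trans of_nat_diff)
        then show False using cg1[OF abd'] z(4) by blast
      qed
      have "(p - y, x) \<in> S" using False z hp c1 c2 unfolding Sh by auto
      moreover have "g (p - y, x) = z" using z(1,3) unfolding g_def by auto
      ultimately show ?thesis by blast
    qed
  qed
  have sub2: "S \<union> g ` S \<subseteq> TT"
  proof (rule subsetI)
    fix z assume "z \<in> S \<union> g ` S"
    then show "z \<in> TT"
    proof
      assume "z \<in> S" then show ?thesis using hp unfolding TT_def Sh Yset_def by auto
    next
      assume "z \<in> g ` S"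
      then obtain i j where ij: "(i,j) \<in> S" "z = (j, p - i)" unfolding g_def by auto
      then have ij2: "i \<in> {1..h}" "j \<in> {1..h}" "\<not> [int i = a * int j] (mod int p)"
         "\<not> [int i = b * int j] (mod int p)" unfolding Sh by auto
      have c1: "\<not> [int j = a * int (p - i)] (mod int p)"
      proof
        assume "[int j = a * int (p - i)] (mod int p)"
        then have "[int j = a * (int p - int i)] (mod int p)" using ij2 hp by (metis (no_types, lifting) atLeastAtMost_iff less_imp_le le_trans of_nat_diff)
        then show False using cg2[OF abd] ij2(4) by blast
      qed
      have c2: "\<not> [int j = b * int (p - i)] (mod int p)"
      proof
        assume "[int j = b * int (p - i)] (mod int p)"
        then have "[int j = b * (int p - int i)] (mod int p)" using ij2 hp by (metis (no_types, lifting) atLeastAtMost_iff less_imp_le le_trans of_nat_diff)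
        then show False using cg2[OF abd'] ij2(3) by blast
      qed
      show ?thesis using ij(2) ij2 c1 c2 hp unfolding TT_def Yset_def by auto
    qed
  qed
  have TTeq: "TT = S \<union> g ` S" using sub1 sub2 by (rule equalityI)
  have disj: "S \<inter> g ` S = {}" using hp unfolding Sh g_def by auto
  have inj: "inj_on g S" unfolding inj_on_def Sh g_def using hp by auto
  have finT: "finite TT" unfolding TT_def using finY by auto
  have P1: "prod f1 TT = prod f1 S * prod (f1 \<circ> g) S"
    unfolding TTeq using finS disj inj by (simp add: prod.union_disjoint prod.reindex)
  have P2: "[prod (f1 \<circ> g) S = (\<Prod>(i,j)\<in>S. a * (int i - b * int j))] (mod int p)"
  proof (rule cong_prod, clarify)
    fix i j assume "(i,j) \<in> S"
    then have "i \<le> p" using hp unfolding Sh by auto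
    then have e: "(f1 \<circ> g) (i,j) = int j - a * (int p - int i)" unfolding f1_def g_def by (simp add: of_nat_diff)
    have "int j - a * (int p - int i) - a * (int i - b * int j) = (a*b+1) * int j - a * int p"
      by (simp add: algebra_simps)
    then show "[(f1 \<circ> g) (i,j) = a * (int i - b * int j)] (mod int p)"
      unfolding e cong_iff_dvd_diff using abd by (metis dvd_diff dvd_mult2 dvd_triv_right)
  qed
  have P3: "(\<Prod>(i,j)\<in>S. a * (int i - b * int j)) = a ^ card S * (\<Prod>(i,j)\<in>S. int i - b * int j)"
    by (simp add: prod.distrib case_prod_beta)
  have P4: "brk a b p = prod f1 S * (\<Prod>(i,j)\<in>S. int i - b * int j)"
    unfolding brk_SS S_def[symmetric] f1_def by (simp add: prod.distrib case_prod_beta)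
  have P5: "(\<Prod>x\<in>{1..h}. CC a b p x) = prod f1 TT"
    unfolding CC_def TT_def f1_def using finY by (simp add: prod.Sigma)
  have "[a ^ card S * brk a b p = prod f1 S * prod (f1 \<circ> g) S] (mod int p)"
    unfolding P4 using cong_mult[OF cong_refl[of "prod f1 S"] cong_sym[OF P2]] P3
    by (simp add: ac_simps)
  then have r1: "[a ^ card S * brk a b p = (\<Prod>x\<in>{1..h}. CC a b p x)] (mod int p)"
    unfolding P5 P1 .
  have "card TT = card S + card (g ` S)" unfolding TTeq using finS disj by (simp add: card_Un_disjoint)
  also have "\<dots> = 2 * card S" using inj by (simp add: card_image)
  finally have "2 * card S = (\<Sum>x\<in>{1..h}. card (Yset a b p x))" unfolding TT_def using finY by simp
  with r1 show ?thesis unfolding S_def h_def by simp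
qed


lemma Dlem:
  assumes x: "x \<in> {1..p-1}"
  shows "[int x * (\<Prod>y\<in>YD a p x. int x - a * int y) = -1] (mod int p) \<and> card (YD a p x) = p - 2"
proof -
  define P where "P = int p"
  have P0: "P > 0" using p3 unfolding P_def by simp
  define fw where "fw = (\<lambda>y::nat. nat ((int x - a * int y) mod P))"
  define iv where "iv = (\<lambda>z::nat. nat (((int z - int x) * b) mod P))"
  define T where "T = {1..p-1} - {x}"
  have ifw: "int (fw y) = (int x - a * int y) mod P" for y unfolding fw_def using P0 by simp
  have iiv: "int (iv z) = ((int z - int x) * b) mod P" for z unfolding iv_def using P0 by simp
  have rng: "y \<in> {1..p-1} \<longleftrightarrow> 0 < int y \<and> int y < P" for y unfolding P_def using p3 by auto
  have abP: "P dvd a*b+1" using abd unfolding P_def .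
  have ndaP: "\<not> P dvd a" using nda unfolding P_def .
  have ndbP: "\<not> P dvd b" using ndb unfolding P_def .
  have pdvdP: "P dvd u * v \<Longrightarrow> P dvd u \<or> P dvd v" for u v using pdvd unfolding P_def .
  have ndyP: "y \<in> {1..p-1} \<Longrightarrow> \<not> P dvd int y" for y using ndy unfolding P_def .
  have xr: "0 < int x" "int x < P" using x rng by auto
  have w1: "iv (fw y) = y" if y: "y \<in> YD a p x" for y
  proof -
    have yr: "0 < int y" "int y < P" using y rng unfolding YD_def by auto
    have "[int (iv (fw y)) = ((int x - a * int y - int x) * b)] (mod P)"
      unfolding iiv ifw cong_mod_left by (intro cong_mult cong_diff) (auto simp: cong_def)
    moreover have "[(int x - a * int y - int x) * b = int y] (mod P)"
    proof -
      have "(int x - a * int y - int x) * b - int y = - ((a*b+1) * int y)" by (simp add: algebra_simps)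
      then show ?thesis unfolding cong_iff_dvd_diff using abP by simp
    qed
    ultimately have "[int (iv (fw y)) = int y] (mod P)" by (rule cong_trans)
    then have "int (iv (fw y)) = int y" using yr iiv P0 by (intro modeq[of _ P]) auto
    then show ?thesis by simp
  qed
  have w2: "fw y \<in> T" if y: "y \<in> YD a p x" for y
  proof -
    have yr: "y \<in> {1..p-1}" "\<not> [int x = a * int y] (mod P)" using y unfolding YD_def P_def by auto
    have nz: "int (fw y) \<noteq> 0"
    proof
      assume "int (fw y) = 0"
      then have "P dvd int x - a * int y" unfolding ifw by auto
      then show False using yr(2) by (simp add: cong_iff_dvd_diff)
    qed
    have nx: "fw y \<noteq> x"
    proof
      assume "fw y = x"
      then have "[int x - a * int y = int x] (mod P)" using ifw[of y] xr by (simp add: cong_def)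
      then have "P dvd a * int y" unfolding cong_iff_dvd_diff by simp
      then show False using pdvdP ndaP ndyP yr(1) by blast
    qed
    have "int (fw y) < P" unfolding ifw using P0 by simp
    then show ?thesis using nz nx rng unfolding T_def by auto
  qed
  have w3: "fw (iv z) = z" if z: "z \<in> T" for z
  proof -
    have zr: "0 < int z" "int z < P" using z rng unfolding T_def by auto
    have "[int (fw (iv z)) = int x - a * ((int z - int x) * b)] (mod P)"
      unfolding iiv ifw cong_mod_left by (intro cong_diff cong_mult) (auto simp: cong_def)
    moreover have "[int x - a * ((int z - int x) * b) = int z] (mod P)"
    proof -
      have "int x - a * ((int z - int x) * b) - int z = - ((a*b+1) * (int z - int x))" by (simp add: algebra_simps)
      then show ?thesis unfolding cong_iff_dvd_diff using abP by simp
    qed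
    ultimately have "[int (fw (iv z)) = int z] (mod P)" by (rule cong_trans)
    then have "int (fw (iv z)) = int z" using zr ifw P0 by (intro modeq[of _ P]) auto
    then show ?thesis by simp
  qed
  have w4: "iv z \<in> YD a p x" if z: "z \<in> T" for z
  proof -
    have zr: "0 < int z" "int z < P" "z \<noteq> x" using z rng unfolding T_def by auto
    have nzx: "\<not> P dvd int z - int x"
    proof
      assume "P dvd int z - int x"
      then have "[int z = int x] (mod P)" by (simp add: cong_iff_dvd_diff)
      then have "int z = int x" using zr xr by (intro modeq[of _ P]) auto
      then show False using zr by simp
    qed
    have nz: "int (iv z) \<noteq> 0"
    proof
      assume "int (iv z) = 0"
      then have "P dvd (int z - int x) * b" unfolding iiv by auto
      then show False using pdvdP nzx ndbP by blast
    qed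
    have nc: "\<not> [int x = a * int (iv z)] (mod P)"
    proof
      assume h1: "[int x = a * int (iv z)] (mod P)"
      have "[a * int (iv z) = a * ((int z - int x) * b)] (mod P)"
        unfolding iiv by (intro cong_mult) (auto simp: cong_def)
      moreover have "[a * ((int z - int x) * b) = int x - int z] (mod P)"
      proof -
        have "a * ((int z - int x) * b) - (int x - int z) = (a*b+1) * (int z - int x)" by (simp add: algebra_simps)
        then show ?thesis unfolding cong_iff_dvd_diff using abP by simp
      qed
      ultimately have "[int x = int x - int z] (mod P)" using h1 by (meson cong_trans)
      then have "P dvd int z" unfolding cong_iff_dvd_diff by simp
      then show False using zr P0 zdvd_imp_le by fastforce
    qed
    have "int (iv z) < P" unfolding iiv using P0 by simp
    then show ?thesis using nz nc rng unfolding YD_def P_def by auto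
  qed
  have finYD: "finite (YD a p x)" unfolding YD_def by auto
  have bij: "bij_betw fw (YD a p x) T"
    using bij_betw_byWitness[where A="YD a p x" and f=fw and f'=iv and A'=T] w1 w2 w3 w4 by auto
  have "(\<Prod>y\<in>YD a p x. int (fw y)) = (\<Prod>z\<in>T. int z)"
    using prod.reindex_bij_betw[OF bij, of int] .
  moreover have "[(\<Prod>y\<in>YD a p x. int x - a * int y) = (\<Prod>y\<in>YD a p x. int (fw y))] (mod P)"
    by (rule cong_prod) (simp add: ifw cong_def)
  ultimately have e1: "[(\<Prod>y\<in>YD a p x. int x - a * int y) = (\<Prod>z\<in>T. int z)] (mod P)" by simp
  have "(\<Prod>z\<in>{1..p-1}. int z) = int x * (\<Prod>z\<in>T. int z)"
    unfolding T_def using x by (simp add: prod.remove)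
  moreover have "(\<Prod>z\<in>{1..p-1}. int z) = fact (p - 1)" by (simp add: fact_prod)
  ultimately have e2: "[int x * (\<Prod>z\<in>T. int z) = -1] (mod P)"
    using wilson_theorem[OF pr] unfolding P_def by simp
  have "[int x * (\<Prod>y\<in>YD a p x. int x - a * int y) = int x * (\<Prod>z\<in>T. int z)] (mod P)"
    using e1 by (rule cong_scalar_left)
  then have c: "[int x * (\<Prod>y\<in>YD a p x. int x - a * int y) = -1] (mod P)" using e2 by (rule cong_trans)
  have "card (YD a p x) = card T" using bij by (rule bij_betw_same_card)
  also have "\<dots> = p - 2" unfolding T_def using x by simp
  finally show ?thesis using c unfolding P_def by simp
qed


lemma Ceq:
  assumes x: "x \<in> {1..p-1}" and e: "[a = b] (mod int p)"
  shows "[int x * CC a b p x = -1] (mod int p) \<and> card (Yset a b p x) = p - 2"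
proof -
  have "Yset a b p x = YD a p x"
  proof -
    have "[a * int y = b * int y] (mod int p)" for y using e by (intro cong_mult) auto
    then have "[int x = a * int y] (mod int p) \<longleftrightarrow> [int x = b * int y] (mod int p)" for y
      by (meson cong_sym cong_trans)
    then show ?thesis unfolding Yset_def YD_def by auto
  qed
  then show ?thesis using Dlem[OF x] unfolding CC_def by simp
qed

lemma Cne:
  assumes x: "x \<in> {1..p-1}" and e: "\<not> [a = b] (mod int p)"
  shows "[int x * (int x * (1 + a^2)) * CC a b p x = -1] (mod int p) \<and> card (Yset a b p x) = p - 3"
proof -
  define P where "P = int p"
  have P0: "P > 0" using p3 unfolding P_def by simp
  have abP: "P dvd a*b+1" using abd unfolding P_def .
  have ndaP: "\<not> P dvd a" using nda unfolding P_def .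
  have pdvdP: "P dvd u * v \<Longrightarrow> P dvd u \<or> P dvd v" for u v using pdvd unfolding P_def .
  have ndyP: "y \<in> {1..p-1} \<Longrightarrow> \<not> P dvd int y" for y using ndy unfolding P_def .
  have rng: "y \<in> {1..p-1} \<longleftrightarrow> 0 < int y \<and> int y < P" for y unfolding P_def using p3 by auto
  define y0 where "y0 = nat ((- a * int x) mod P)"
  have iy0: "int y0 = (- a * int x) mod P" unfolding y0_def using P0 by simp
  have y0r: "y0 \<in> {1..p-1}"
  proof -
    have "int y0 \<noteq> 0"
    proof
      assume "int y0 = 0"
      then have "P dvd a * int x" unfolding iy0 by auto
      then show False using pdvdP ndaP ndyP x by blast
    qed
    moreover have "int y0 < P" unfolding iy0 using P0 by simp
    ultimately show ?thesis using rng by auto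
  qed
  have by0: "[int x = b * int y0] (mod P)"
  proof -
    have "[b * int y0 = b * (- a * int x)] (mod P)" unfolding iy0 by (intro cong_mult) (auto simp: cong_def)
    moreover have "[b * (- a * int x) = int x] (mod P)"
    proof -
      have "b * (- a * int x) - int x = - ((a*b+1) * int x)" by (simp add: algebra_simps)
      then show ?thesis unfolding cong_iff_dvd_diff using abP by simp
    qed
    ultimately show ?thesis by (meson cong_sym cong_trans)
  qed
  have bimp: "y = y0" if y: "y \<in> {1..p-1}" "[int x = b * int y] (mod P)" for y
  proof -
    have "[int y = - a * int x] (mod P)"
    proof -
      have f1: "P dvd int x - b * int y" using y(2) by (simp add: cong_iff_dvd_diff)
      have f2: "int y - - a * int x = a * (int x - b * int y) + int y * (a*b+1)" by (simp add: algebra_simps)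
      show ?thesis unfolding cong_iff_dvd_diff by (rule dvd_lin[OF f1 abP f2])
    qed
    then have "[int y = int y0] (mod P)" unfolding iy0 by simp
    then have "int y = int y0" using y(1) y0r rng by (intro modeq[of _ P]) auto
    then show ?thesis by simp
  qed
  have y0D: "y0 \<in> YD a p x"
  proof -
    have "\<not> [int x = a * int y0] (mod P)"
    proof
      assume h1: "[int x = a * int y0] (mod P)"
      then have "[a * int y0 = b * int y0] (mod P)" using by0 by (meson cong_sym cong_trans)
      then have "P dvd (a - b) * int y0" unfolding cong_iff_dvd_diff by (simp add: algebra_simps)
      then have "P dvd a - b" using pdvdP ndyP y0r by blast
      then show False using e unfolding P_def by (simp add: cong_iff_dvd_diff)
    qed
    then show ?thesis using y0r unfolding YD_def P_def by auto
  qed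
  have Yeq: "Yset a b p x = YD a p x - {y0}"
  proof -
    have "y \<in> Yset a b p x \<longleftrightarrow> y \<in> YD a p x - {y0}" for y
      unfolding Yset_def YD_def mem_Collect_eq Diff_iff singleton_iff
      using bimp[unfolded P_def, of y] by0[unfolded P_def] by blast
    then show ?thesis by blast
  qed
  have finYD: "finite (YD a p x)" unfolding YD_def by auto
  have pr1: "(\<Prod>y\<in>YD a p x. int x - a * int y) = (int x - a * int y0) * CC a b p x"
    unfolding CC_def Yeq using prod.remove[OF finYD y0D] .
  have f0: "[int x - a * int y0 = int x * (1 + a^2)] (mod P)"
  proof -
    have "[int x - a * int y0 = int x - a * (- a * int x)] (mod P)"
      unfolding iy0 by (intro cong_diff cong_mult) (auto simp: cong_def)
    moreover have "int x - a * (- a * int x) = int x * (1 + a^2)" by (simp add: algebra_simps power2_eq_square)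
    ultimately show ?thesis by simp
  qed
  have "[int x * (int x * (1 + a^2)) * CC a b p x = int x * ((int x - a * int y0) * CC a b p x)] (mod P)"
  proof -
    have "[int x * ((int x * (1 + a^2)) * CC a b p x) = int x * ((int x - a * int y0) * CC a b p x)] (mod P)"
      by (intro cong_mult cong_refl cong_sym[OF f0])
    then show ?thesis by (simp add: mult.assoc)
  qed
  then have c: "[int x * (int x * (1 + a^2)) * CC a b p x = -1] (mod int p)"
    using Dlem[OF x] pr1 unfolding P_def by (metis cong_trans)
  have "card (Yset a b p x) = card (YD a p x) - 1" unfolding Yeq using finYD y0D by simp
  then show ?thesis using c Dlem[OF x] by simp
qed


lemma hfacts: "2 * ((p-1) div 2) + 1 = p" "(p-1) div 2 < p" "(p-1) div 2 \<ge> 1"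
proof -
  show "2 * ((p-1) div 2) + 1 = p" using od p3 by presburger
  show "(p-1) div 2 < p" using p3 by linarith
  show "(p-1) div 2 \<ge> 1" using p3 by linarith
qed

lemma Wlem: "[(fact ((p-1) div 2) :: int) ^ 2 = (-1) ^ ((p-1) div 2 + 1)] (mod int p)"
proof -
  define h where "h = (p-1) div 2"
  have hp: "2*h+1 = p" unfolding h_def using hfacts by simp
  define F where "F = (\<Prod>x\<in>{1..h}. int x)"
  have Fd: "fact h = F" unfolding F_def by (simp add: fact_prod)
  have spl: "{1..p-1} = {1..h} \<union> {h+1..p-1}" using hp by auto
  have "(\<Prod>z\<in>{1..p-1}. int z) = F * (\<Prod>z\<in>{h+1..p-1}. int z)"
    unfolding spl F_def by (subst prod.union_disjoint) auto
  moreover have "(\<Prod>z\<in>{h+1..p-1}. int z) = (\<Prod>i\<in>{1..h}. int (p - i))"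
    by (rule prod.reindex_bij_witness[where i="\<lambda>z. p - z" and j="\<lambda>i. p - i"]) (use hp in auto)
  moreover have "[(\<Prod>i\<in>{1..h}. int (p - i)) = (\<Prod>i\<in>{1..h}. - int i)] (mod int p)"
  proof (rule cong_prod)
    fix i assume "i \<in> {1..h}"
    then have "int (p - i) = int p + - int i" using hp by (simp add: of_nat_diff)
    then show "[int (p - i) = - int i] (mod int p)" by (simp add: cong_def)
  qed
  moreover have "(\<Prod>i\<in>{1..h}. - int i) = (-1)^h * F"
    unfolding F_def by (simp add: prod_uminus)
  moreover have "(\<Prod>z\<in>{1..p-1}. int z) = fact (p - 1)" by (simp add: fact_prod)
  ultimately have "[F * ((-1)^h * F) = -1] (mod int p)"
    using wilson_theorem[OF pr] by (metis cong_scalar_left cong_sym cong_trans)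
  then have "[(-1)^h * ((-1)^h * F^2) = (-1)^h * -1] (mod int p)"
    by (metis cong_scalar_left mult.left_commute power2_eq_square)
  then have "[F^2 = (-1)^(h+1)] (mod int p)"
    by (simp add: power_mult_distrib[symmetric] flip: power_add mult.assoc)
  then show ?thesis unfolding h_def[symmetric] Fd .
qed

lemma Fermat2: assumes "\<not> int p dvd x" shows "[x ^ (2 * ((p-1) div 2)) = 1] (mod int p)"
proof -
  have e: "[Legendre x (int p) = x ^ ((p - 1) div 2)] (mod int p)"
    using euler_criterion[OF pr] p3 by simp
  have "Legendre x (int p) \<in> {1, -1}" using assms unfolding Legendre_def by (simp add: cong_0_iff)
  then have "Legendre x (int p) ^ 2 = 1" by auto
  moreover have "[Legendre x (int p) ^ 2 = (x ^ ((p - 1) div 2)) ^ 2] (mod int p)" using e by (rule cong_pow)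
  ultimately show ?thesis by (simp add: power_mult[symmetric] mult.commute cong_sym)
qed

lemma Legcong: assumes "[x = y] (mod int p)" shows "Legendre x (int p) = Legendre y (int p)"
proof -
  have "[x = 0] (mod int p) \<longleftrightarrow> [y = 0] (mod int p)" using assms by (meson cong_sym cong_trans)
  moreover have "QuadRes (int p) x \<longleftrightarrow> QuadRes (int p) y"
    unfolding QuadRes_def using assms by (meson cong_sym cong_trans)
  ultimately show ?thesis unfolding Legendre_def by simp
qed

lemma Euler: "[Legendre x (int p) = x ^ ((p - 1) div 2)] (mod int p)"
  using euler_criterion[OF pr] p3 by simp

lemma inv1: fixes V B m :: int assumes "[V*V = 1] (mod m)" "[V*B = -1] (mod m)" shows "[-B = V] (mod m)"
proof -
  have "[V*V*B = 1*B] (mod m)" using assms(1) by (rule cong_mult) simp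
  moreover have "[V*(V*B) = V*(-1)] (mod m)" using assms(2) by (rule cong_scalar_left)
  ultimately have "[B = -V] (mod m)" by (simp add: mult.assoc) (meson cong_sym cong_trans)
  then show ?thesis by (metis cong_minus_minus_iff minus_minus)
qed


lemma caseNE: assumes e: "\<not> [a = b] (mod int p)"
  shows "[(1 + a^2) ^ ((p-1) div 2) * (a ^ ((p-1) div 2 * ((p-1) div 2 - 1)) * brk a b p) = -1] (mod int p)"
proof -
  define h where "h = (p-1) div 2"
  define N where "N = card (SS a b p)"
  define F where "F = (\<Prod>x\<in>{1..h}. int x)"
  define Pi where "Pi = (\<Prod>x\<in>{1..h}. CC a b p x)"
  have hp: "2*h+1 = p" "h < p" using hfacts unfolding h_def by auto
  have Fd: "fact h = F" unfolding F_def by (simp add: fact_prod)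
  have xin: "x \<in> {1..h} \<Longrightarrow> x \<in> {1..p-1}" for x using hp by auto
  have m1: "[a ^ N * brk a b p = Pi] (mod int p)" and m2: "2 * N = (\<Sum>x\<in>{1..h}. card (Yset a b p x))"
    using M1 unfolding N_def Pi_def h_def by auto
  have "(\<Sum>x\<in>{1..h}. card (Yset a b p x)) = (\<Sum>x\<in>{1..h}. p - 3)"
    using Cne[OF xin e] by (intro sum.cong) auto
  then have "2 * N = h * (p - 3)" using m2 by simp
  also have "h * (p - 3) = 2 * (h * (h - 1))"
  proof -
    have "p - 3 = 2 * (h - 1)" using hp by linarith
    then show ?thesis by simp
  qed
  finally have Nv: "N = h * (h - 1)" by simp
  have "[(\<Prod>x\<in>{1..h}. int x * (int x * (1 + a^2)) * CC a b p x) = (\<Prod>x\<in>{1..h}. -1)] (mod int p)"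
    using Cne[OF xin e] by (intro cong_prod) auto
  moreover have "(\<Prod>x\<in>{1..h}. int x * (int x * (1 + a^2)) * CC a b p x) = F^2 * ((1 + a^2)^h * Pi)"
    unfolding F_def Pi_def by (simp add: prod.distrib power2_eq_square)
  ultimately have c1: "[F^2 * ((1 + a^2)^h * Pi) = (-1)^h] (mod int p)" by simp
  have "[F^2 * ((1 + a^2)^h * Pi) = (-1)^(h+1) * ((1 + a^2)^h * Pi)] (mod int p)"
    using Wlem unfolding h_def[symmetric] Fd by (rule cong_mult) simp
  then have "[(-1)^(h+1) * ((1 + a^2)^h * Pi) = (-1)^h] (mod int p)" using c1 by (meson cong_sym cong_trans)
  then have "[(-1)^(h+1) * ((-1)^(h+1) * ((1 + a^2)^h * Pi)) = (-1)^(h+1) * (-1)^h] (mod int p)"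
    by (rule cong_scalar_left)
  moreover have "(-1::int)^(h+1) * (-1)^(h+1) = 1" by (simp flip: power_add)
  moreover have "(-1::int)^(h+1) * (-1)^h = -1" by (simp flip: power_add)
  ultimately have c2: "[(1 + a^2)^h * Pi = -1] (mod int p)" by (simp add: mult.assoc[symmetric])
  have "[(1 + a^2)^h * (a ^ N * brk a b p) = (1 + a^2)^h * Pi] (mod int p)" using m1 by (rule cong_scalar_left)
  then have "[(1 + a^2)^h * (a ^ N * brk a b p) = -1] (mod int p)" using c2 by (rule cong_trans)
  then show ?thesis unfolding Nv h_def .
qed

lemma caseEQ: assumes e: "[a = b] (mod int p)" and ev: "even ((p-1) div 2)"
  shows "\<exists>N. 2 * N = (p-1) div 2 * (p - 2) \<and> [a ^ N * brk a b p = - fact ((p-1) div 2)] (mod int p)"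
proof -
  define h where "h = (p-1) div 2"
  define N where "N = card (SS a b p)"
  define F where "F = (\<Prod>x\<in>{1..h}. int x)"
  define Pi where "Pi = (\<Prod>x\<in>{1..h}. CC a b p x)"
  have hp: "2*h+1 = p" "h < p" using hfacts unfolding h_def by auto
  have Fd: "fact h = F" unfolding F_def by (simp add: fact_prod)
  have xin: "x \<in> {1..h} \<Longrightarrow> x \<in> {1..p-1}" for x using hp by auto
  have m1: "[a ^ N * brk a b p = Pi] (mod int p)" and m2: "2 * N = (\<Sum>x\<in>{1..h}. card (Yset a b p x))"
    using M1 unfolding N_def Pi_def h_def by auto
  have "(\<Sum>x\<in>{1..h}. card (Yset a b p x)) = (\<Sum>x\<in>{1..h}. p - 2)"
    using Ceq[OF xin e] by (intro sum.cong) auto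
  then have Nv: "2 * N = h * (p - 2)" using m2 by simp
  have "[(\<Prod>x\<in>{1..h}. int x * CC a b p x) = (\<Prod>x\<in>{1..h}. -1)] (mod int p)"
    using Ceq[OF xin e] by (intro cong_prod) auto
  moreover have "(\<Prod>x\<in>{1..h}. int x * CC a b p x) = F * Pi"
    unfolding F_def Pi_def by (simp add: prod.distrib)
  moreover have "(\<Prod>x\<in>{1..h}. (-1::int)) = 1" using ev unfolding h_def by simp
  ultimately have c1: "[F * Pi = 1] (mod int p)" by simp
  have w: "[F^2 = -1] (mod int p)" using Wlem ev unfolding h_def[symmetric] Fd by simp
  have "[F * (F * Pi) = F * 1] (mod int p)" using c1 by (rule cong_scalar_left)
  moreover have "[F * (F * Pi) = -1 * Pi] (mod int p)"
    using cong_mult[OF w cong_refl[of Pi]] by (simp add: power2_eq_square mult.assoc)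
  ultimately have "[- Pi = F] (mod int p)" by (metis cong_sym cong_trans mult_minus1 mult_1_right)
  then have "[Pi = - F] (mod int p)" by (metis cong_minus_minus_iff minus_minus)
  then have "[a ^ N * brk a b p = - F] (mod int p)" using m1 by (meson cong_trans)
  then show ?thesis using Nv unfolding h_def Fd[unfolded h_def] by blast
qed


lemma a2: assumes "[a = b] (mod int p)" shows "[a^2 = -1] (mod int p)"
proof -
  have "[a*a = a*b] (mod int p)" using assms by (rule cong_scalar_left)
  then show ?thesis using ab by (simp add: power2_eq_square) (meson cong_trans)
qed

lemma negpow: "(-1::int)^(n + 2*m) = (-1)^n"
  by (simp add: power_add power_mult)

lemma part_i1: assumes p4: "[p = 1] (mod 4)" and nd: "\<not> int p dvd (a - b)"
  shows "[- brk a b p = Legendre (a - b) (int p)] (mod int p)"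
proof -
  define h where "h = (p-1) div 2"
  have hp: "2*h+1 = p" "h \<ge> 1" using hfacts unfolding h_def by auto
  from p4 have "p mod 4 = 1" by (simp add: cong_def)
  then have "even h" using hp by presburger
  then obtain m where m: "h = 2*m" by (auto elim: evenE)
  have m1: "m \<ge> 1" using m hp by simp
  have ne: "\<not> [a = b] (mod int p)" using nd by (simp add: cong_iff_dvd_diff)
  have c0: "[(1 + a^2) ^ h * (a ^ (h * (h - 1)) * brk a b p) = -1] (mod int p)"
    using caseNE[OF ne] unfolding h_def .
  have "h * (h - 1) = h + 2 * h * (m - 1)" using m m1 by (simp add: algebra_simps)
  then have "a ^ (h * (h - 1)) = a ^ h * (a ^ (2 * h)) ^ (m - 1)" by (simp add: power_add power_mult)
  moreover have "[(a ^ (2 * h)) ^ (m - 1) = 1 ^ (m - 1)] (mod int p)"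
    using Fermat2[OF nda] unfolding h_def[symmetric] by (rule cong_pow)
  ultimately have aN: "[a ^ (h * (h - 1)) = a ^ h] (mod int p)" using cong_scalar_left by fastforce
  have "[(1 + a^2) ^ h * (a ^ (h * (h - 1)) * brk a b p) = (1 + a^2) ^ h * (a ^ h * brk a b p)] (mod int p)"
    using aN by (intro cong_mult cong_refl)
  moreover have "(1 + a^2) ^ h * (a ^ h * brk a b p) = ((1 + a^2) * a) ^ h * brk a b p"
    by (simp add: power_mult_distrib)
  ultimately have c1: "[((1 + a^2) * a) ^ h * brk a b p = -1] (mod int p)" using c0 by (metis cong_sym cong_trans)
  have "[(1 + a^2) * a = a^2 * (a - b)] (mod int p)"
  proof -
    have "(1 + a^2) * a - a^2 * (a - b) = a * (a*b+1)" by (simp add: algebra_simps power2_eq_square)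
    then show ?thesis unfolding cong_iff_dvd_diff using abd by simp
  qed
  then have "[((1 + a^2) * a) ^ h = (a^2 * (a - b)) ^ h] (mod int p)" by (rule cong_pow)
  moreover have "(a^2 * (a - b)) ^ h = a ^ (2*h) * (a - b) ^ h" by (simp add: power_mult_distrib power_mult)
  moreover have "[a ^ (2*h) * (a - b) ^ h = 1 * (a - b) ^ h] (mod int p)"
    using Fermat2[OF nda] unfolding h_def[symmetric] by (rule cong_mult) simp
  ultimately have "[((1 + a^2) * a) ^ h = (a - b) ^ h] (mod int p)" by (metis cong_trans mult_1)
  then have c2: "[(a - b) ^ h * brk a b p = -1] (mod int p)" using c1 by (metis cong_mult cong_refl cong_sym cong_trans)
  have c3: "[(a - b) ^ h * (a - b) ^ h = 1] (mod int p)"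
    using Fermat2[OF nd] unfolding h_def[symmetric] by (simp add: mult_2 power_add)
  have "[- brk a b p = (a - b) ^ h] (mod int p)" by (rule inv1[OF c3 c2])
  then show ?thesis using Euler[of "a - b"] unfolding h_def[symmetric] by (metis cong_sym cong_trans)
qed

lemma part_i3: assumes p4: "[p = 3] (mod 4)"
  shows "[- brk a b p = Legendre (a * (a - b)) (int p)] (mod int p)
          \<and> Legendre (a * (a - b)) (int p) = Legendre (a ^ 2 + 1) (int p)"
proof -
  define h where "h = (p-1) div 2"
  have hp: "2*h+1 = p" "h \<ge> 1" using hfacts unfolding h_def by auto
  from p4 have "p mod 4 = 3" by (simp add: cong_def)
  then have "odd h" using hp by presburger
  then obtain m where m: "h = 2*m+1" by (auto elim: oddE)
  have ne: "\<not> [a = b] (mod int p)"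
  proof
    assume e: "[a = b] (mod int p)"
    have "[(a^2)^h = (-1)^h] (mod int p)" using a2[OF e] by (rule cong_pow)
    then have "[a^(2*h) = -1] (mod int p)" using \<open>odd h\<close> by (simp add: power_mult)
    moreover have "[a^(2*h) = 1] (mod int p)" using Fermat2[OF nda] unfolding h_def .
    ultimately have "[1 = -1] (mod int p)" by (metis cong_sym cong_trans)
    then have "int p dvd 2" by (simp add: cong_iff_dvd_diff)
    then have "p dvd 2" by presburger
    then show False using p3 by (auto dest: dvd_imp_le)
  qed
  have nd: "\<not> int p dvd (a - b)" using ne by (simp add: cong_iff_dvd_diff)
  have c0: "[(1 + a^2) ^ h * (a ^ (h * (h - 1)) * brk a b p) = -1] (mod int p)"
    using caseNE[OF ne] unfolding h_def .
  have "h * (h - 1) = (2 * h) * m" using m by simp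
  then have "a ^ (h * (h - 1)) = (a ^ (2 * h)) ^ m" by (simp only: power_mult)
  moreover have "[(a ^ (2 * h)) ^ m = 1 ^ m] (mod int p)"
    using Fermat2[OF nda] unfolding h_def[symmetric] by (rule cong_pow)
  ultimately have aN: "[a ^ (h * (h - 1)) = 1] (mod int p)" by simp
  have "[(1 + a^2) ^ h * (a ^ (h * (h - 1)) * brk a b p) = (1 + a^2) ^ h * (1 * brk a b p)] (mod int p)"
    using aN by (intro cong_mult cong_refl)
  then have c1: "[(1 + a^2) ^ h * brk a b p = -1] (mod int p)" using c0 by (metis cong_sym cong_trans mult_1)
  have ce: "[a * (a - b) = a^2 + 1] (mod int p)"
  proof -
    have e: "a * (a - b) - (a^2 + 1) = - (a*b+1)" by (simp add: algebra_simps power2_eq_square)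
    show ?thesis unfolding cong_iff_dvd_diff e using abd by (simp only: dvd_minus_iff)
  qed
  then have "[(a * (a - b)) ^ h = (1 + a^2) ^ h] (mod int p)" by (simp add: cong_pow add.commute)
  then have c2: "[(a * (a - b)) ^ h * brk a b p = -1] (mod int p)" using c1 by (metis cong_mult cong_refl cong_trans)
  have ndp: "\<not> int p dvd a * (a - b)" using pdvd nda nd by blast
  have c3: "[(a * (a - b)) ^ h * (a * (a - b)) ^ h = 1] (mod int p)"
    using Fermat2[OF ndp] unfolding h_def[symmetric] by (simp add: mult_2 power_add)
  have "[- brk a b p = (a * (a - b)) ^ h] (mod int p)" by (rule inv1[OF c3 c2])
  then have "[- brk a b p = Legendre (a * (a - b)) (int p)] (mod int p)"
    using Euler[of "a * (a - b)"] unfolding h_def[symmetric] by (metis cong_sym cong_trans)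
  moreover have "Legendre (a * (a - b)) (int p) = Legendre (a ^ 2 + 1) (int p)" using ce by (rule Legcong)
  ultimately show ?thesis by simp
qed


lemma part_ii1: assumes e: "[a = b] (mod int p)" and p8: "[p = 1] (mod 8)"
  shows "[brk a b p = (-1) ^ ((p + 7) div 8) * fact ((p - 1) div 2)] (mod int p)"
proof -
  define h where "h = (p-1) div 2"
  define F :: int where "F = fact h"
  define r where "r = p div 8"
  have hp: "2*h+1 = p" using hfacts unfolding h_def by auto
  from p8 have pm: "p mod 8 = 1" by (simp add: cong_def)
  then have pr8: "p = 8*r+1" unfolding r_def by presburger
  then have hr: "h = 4*r" using hp by linarith
  have r7: "(p + 7) div 8 = r + 1" using pr8 by simp
  have "even h" using hr by simp
  then obtain N where N: "2 * N = h * (p - 2)" and c0: "[a ^ N * brk a b p = - F] (mod int p)"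
    using caseEQ[OF e] unfolding h_def F_def by blast
  have "2 * N = 2 * (2 * (r * (8 * r - 1)))" using N hr pr8 by (simp add: algebra_simps)
  then have Nv: "N = 2 * (r * (8 * r - 1))" by simp
  have "[(a^2) ^ (r * (8 * r - 1)) = (-1) ^ (r * (8 * r - 1))] (mod int p)" using a2[OF e] by (rule cong_pow)
  moreover have "(-1::int) ^ (r * (8 * r - 1)) = (-1) ^ r"
  proof (cases "r = 0")
    case False
    then have "r * (8 * r - 1) = r + 2 * (r * (4 * r - 1))" by (simp add: algebra_simps)
    then show ?thesis using negpow by simp
  qed simp
  ultimately have aN: "[a ^ N = (-1) ^ r] (mod int p)" unfolding Nv by (simp add: power_mult)
  have "[a ^ N * brk a b p = (-1) ^ r * brk a b p] (mod int p)" using aN by (rule cong_mult) simp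
  then have "[(-1) ^ r * brk a b p = - F] (mod int p)" using c0 by (metis cong_sym cong_trans)
  then have "[(-1) ^ r * ((-1) ^ r * brk a b p) = (-1) ^ r * - F] (mod int p)" by (rule cong_scalar_left)
  moreover have "(-1::int) ^ r * ((-1) ^ r * brk a b p) = brk a b p" by (simp flip: mult.assoc power_add)
  moreover have "(-1::int) ^ r * - F = (-1) ^ (r + 1) * F" by simp
  ultimately show ?thesis unfolding r7 F_def h_def by simp
qed

lemma part_ii5: assumes k: "k \<in> {0, 1}" and p8: "[p = 5] (mod 8)"
  and ha: "[a = (-1) ^ k * fact ((p - 1) div 2)] (mod int p)"
  and hb: "[b = (-1) ^ k * fact ((p - 1) div 2)] (mod int p)"
  shows "[brk a b p = (-1) ^ (k + (p - 5) div 8)] (mod int p)"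
proof -
  define h where "h = (p-1) div 2"
  define F :: int where "F = fact h"
  define s where "s = p div 8"
  define eps :: int where "eps = (-1) ^ k"
  have e: "[a = b] (mod int p)" using ha hb by (metis cong_sym cong_trans)
  have hp: "2*h+1 = p" using hfacts unfolding h_def by auto
  from p8 have pm: "p mod 8 = 5" by (simp add: cong_def)
  then have ps8: "p = 8*s+5" unfolding s_def by presburger
  then have hs: "h = 4*s+2" using hp by linarith
  have s5: "(p - 5) div 8 = s" using ps8 by simp
  have "even h" using hs by simp
  then obtain N where N: "2 * N = h * (p - 2)" and c0: "[a ^ N * brk a b p = - F] (mod int p)"
    using caseEQ[OF e] unfolding h_def F_def by blast
  define M where "M = 8*s*s + 7*s + 1"
  have "2 * N = 2 * (2 * M + 1)" using N hs ps8 unfolding M_def by (simp add: algebra_simps)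
  then have Nv: "N = 1 + 2 * M" by simp
  have "[(a^2) ^ M = (-1) ^ M] (mod int p)" using a2[OF e] by (rule cong_pow)
  moreover have "(-1::int) ^ M = (-1) ^ (s + 1)"
  proof -
    have me: "M = (s + 1) + 2 * (4*s*s + 3*s)" unfolding M_def by simp
    show ?thesis unfolding me by (rule negpow)
  qed
  ultimately have "[(a^2) ^ M = (-1) ^ (s + 1)] (mod int p)" by simp
  then have "[a * (a^2) ^ M = a * (-1) ^ (s + 1)] (mod int p)" by (rule cong_scalar_left)
  moreover have "a ^ N = a * (a^2) ^ M" unfolding Nv by (simp add: power_add power_mult)
  moreover have "[a * (-1) ^ (s + 1) = eps * F * (-1) ^ (s + 1)] (mod int p)"
    using ha unfolding eps_def F_def h_def by (rule cong_mult) simp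
  ultimately have aN: "[a ^ N = eps * F * (-1) ^ (s + 1)] (mod int p)" by (metis cong_trans)
  have "[a ^ N * brk a b p = eps * F * (-1) ^ (s + 1) * brk a b p] (mod int p)" using aN by (rule cong_mult) simp
  then have c1: "[eps * F * (-1) ^ (s + 1) * brk a b p = - F] (mod int p)" using c0 by (metis cong_sym cong_trans)
  have w: "[F^2 = -1] (mod int p)" using Wlem \<open>even h\<close> unfolding h_def[symmetric] F_def by simp
  have "[F * (eps * F * (-1) ^ (s + 1) * brk a b p) = F * - F] (mod int p)" using c1 by (rule cong_scalar_left)
  moreover have "F * (eps * F * (-1) ^ (s + 1) * brk a b p) = F^2 * (eps * (-1) ^ (s + 1) * brk a b p)"
    by (simp add: power2_eq_square algebra_simps)
  moreover have "F * - F = - (F^2)" by (simp add: power2_eq_square)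
  moreover have "[F^2 * (eps * (-1) ^ (s + 1) * brk a b p) = -1 * (eps * (-1) ^ (s + 1) * brk a b p)] (mod int p)"
    using w by (rule cong_mult) simp
  moreover have "[- (F^2) = 1] (mod int p)" using w by (metis cong_minus_minus_iff minus_minus)
  ultimately have "[-1 * (eps * (-1) ^ (s + 1) * brk a b p) = 1] (mod int p)" by (metis cong_sym cong_trans)
  moreover have "-1 * (eps * (-1) ^ (s + 1) * brk a b p) = (eps * (-1) ^ s) * brk a b p" by simp
  ultimately have c2: "[(eps * (-1) ^ s) * brk a b p = 1] (mod int p)" by simp
  define u where "u = eps * (-1) ^ s"
  have uu: "u * u = 1" unfolding u_def eps_def by (simp add: algebra_simps flip: power_add)
  have "[u * (u * brk a b p) = u * 1] (mod int p)" using c2 unfolding u_def[symmetric] by (rule cong_scalar_left)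
  moreover have "u * (u * brk a b p) = brk a b p" using uu by (simp flip: mult.assoc)
  moreover have "u = (-1) ^ (k + s)" unfolding u_def eps_def by (simp add: power_add)
  ultimately show ?thesis unfolding s5 by simp
qed

end

theorem theorem1p3:
  fixes p :: nat and a b :: int
  assumes "prime p" and "odd p" and "[a * b = -1] (mod int p)"
  shows "[brk a b p = Tp p 1 (-(a+b)) (-1)] (mod int p)
    \<and> ([p = 1] (mod 4) \<longrightarrow> \<not> int p dvd (a - b) \<longrightarrow>
          [- brk a b p = Legendre (a - b) (int p)] (mod int p))
    \<and> ([p = 3] (mod 4) \<longrightarrow>
          [- brk a b p = Legendre (a * (a - b)) (int p)] (mod int p)
          \<and> Legendre (a * (a - b)) (int p) = Legendre (a ^ 2 + 1) (int p))
    \<and> ([a = b] (mod int p) \<longrightarrow> [p = 1] (mod 8) \<longrightarrow>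
          [brk a b p = (-1) ^ ((p + 7) div 8) * fact ((p - 1) div 2)] (mod int p))
    \<and> (\<forall>k::nat. k \<in> {0, 1} \<longrightarrow> [p = 5] (mod 8) \<longrightarrow>
          [a = (-1) ^ k * fact ((p - 1) div 2)] (mod int p) \<longrightarrow>
          [b = (-1) ^ k * fact ((p - 1) div 2)] (mod int p) \<longrightarrow>
          [brk a b p = (-1) ^ (k + (p - 5) div 8)] (mod int p))"
proof -
  note A = assms
  show ?thesis
    using part1[OF A] part_i1[OF A] part_i3[OF A] part_ii1[OF A] part_ii5[OF A] by blast
qed

end
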